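(* Let $\lambda$ be a positive integer, $\mu\in\mathbb{R}$, and let $F$, $G$ be smooth functions of $\psi$ on an open interval, with $G$ nonconstant. Consider the function $$I_\lambda=\mathcal{U}^\lambda G(\psi)=\left(p_r+\frac{\mu}{r}\mathcal{X}_L\right)^\lambda G(\psi).$$ Then $I_\lambda$ is a constant of motion of $H=\frac12p_r^2+\frac{1}{r^2}\left(\frac12p_\psi^2+F(\psi)\right)$ (i.e. $\{I_\lambda,H\}=0$, equivalently $\mathcal{X}_H I_\lambda=0$) if and only if $\lambda\mu=1$ and there are constants $k,\psi_0\in\mathbb{R}$ and $A\neq0$ such that $$F(\psi)=\frac{k}{\sin^2(\lambda\psi+\psi_0)},\qquad G(\psi)=A\cos(\lambda\psi+\psi_0)$$ (on the interval, where $\sin(\lambda\psi+\psi_0)\neq0$).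
   Context: Phase space coordinates are $(r,\psi,p_r,p_\psi)$ with $r>0$ and canonical Poisson bracket; dots denote derivatives in $\psi$. $L=\frac12p_\psi^2+F(\psi)$, $\mathcal{X}_L=p_\psi\frac{\partial}{\partial\psi}-\dot F\frac{\partial}{\partial p_\psi}$ is its Hamiltonian vector field, and $\mathcal{X}_H=p_r\frac{\partial}{\partial r}+\frac{2L}{r^3}\frac{\partial}{\partial p_r}+\frac{1}{r^2}\mathcal{X}_L$ is the Hamiltonian vector field of $H$. $\mathcal{U}=p_r+\frac{\mu}{r}\mathcal{X}_L$ is a differential operator ($p_r$ and $\mu/r$ act by multiplication), and $\mathcal{U}^\lambda G$ means applying $\mathcal{U}$ $\lambda$ times to the function $G(\psi)$. *)

theory Defs
  imports "HOL-Analysis.Analysis"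
begin

text \<open>Phase-space functions are functions of (r, psi, p_r, p_psi), curried.\<close>
type_synonym pfun = "real \<Rightarrow> real \<Rightarrow> real \<Rightarrow> real \<Rightarrow> real"

definition smooth_on :: "real set \<Rightarrow> (real \<Rightarrow> real) \<Rightarrow> bool" where
  "smooth_on J f \<longleftrightarrow> (\<forall>n. \<forall>x\<in>J. (((deriv :: (real \<Rightarrow> real) \<Rightarrow> real \<Rightarrow> real) ^^ n) f) differentiable (at x))"

text \<open>Hamiltonian vector field of L = p_psi^2/2 + F(psi):
  X_L = p_psi d/dpsi - F' d/dp_psi.\<close>
definition XL :: "(real \<Rightarrow> real) \<Rightarrow> pfun \<Rightarrow> pfun" where
  "XL F f = (\<lambda>r \<psi> pr p\<psi>.
      p\<psi> * deriv (\<lambda>x. f r x pr p\<psi>) \<psi> - deriv F \<psi> * deriv (\<lambda>y. f r \<psi> pr y) p\<psi>)"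

definition Lfun :: "(real \<Rightarrow> real) \<Rightarrow> pfun" where
  "Lfun F = (\<lambda>r \<psi> pr p\<psi>. p\<psi>\<^sup>2 / 2 + F \<psi>)"

text \<open>Hamiltonian vector field of H = p_r^2/2 + L/r^2:
  X_H = p_r d/dr + (2L/r^3) d/dp_r + (1/r^2) X_L.\<close>
definition XH :: "(real \<Rightarrow> real) \<Rightarrow> pfun \<Rightarrow> pfun" where
  "XH F f = (\<lambda>r \<psi> pr p\<psi>.
      pr * deriv (\<lambda>s. f s \<psi> pr p\<psi>) r
      + 2 * Lfun F r \<psi> pr p\<psi> / r ^ 3 * deriv (\<lambda>q. f r \<psi> q p\<psi>) pr
      + XL F f r \<psi> pr p\<psi> / r\<^sup>2)"

definition Uop :: "real \<Rightarrow> (real \<Rightarrow> real) \<Rightarrow> pfun \<Rightarrow> pfun" where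
  "Uop \<mu> F f = (\<lambda>r \<psi> pr p\<psi>. pr * f r \<psi> pr p\<psi> + \<mu> / r * XL F f r \<psi> pr p\<psi>)"

definition Ilam :: "nat \<Rightarrow> real \<Rightarrow> (real \<Rightarrow> real) \<Rightarrow> (real \<Rightarrow> real) \<Rightarrow> pfun" where
  "Ilam n \<mu> F G = (Uop \<mu> F ^^ n) (\<lambda>r \<psi> pr p\<psi>. G \<psi>)"

definition const_of_motion :: "real set \<Rightarrow> (real \<Rightarrow> real) \<Rightarrow> pfun \<Rightarrow> bool" where
  "const_of_motion J F I \<longleftrightarrow>
     (\<forall>r>0. \<forall>\<psi>\<in>J. \<forall>pr p\<psi>. XH F I r \<psi> pr p\<psi> = 0)"

end

theory Submission
  imports Defs
begin

lemma ev_open: "open J \<Longrightarrow> x \<in> J \<Longrightarrow> (\<forall>y\<in>J. f y = g y) \<Longrightarrow> eventually (\<lambda>y. f y = g y) (nhds x)"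
  by (rule eventually_mono[OF eventually_nhds_in_open[of J x]]) auto

lemma diff_cong_ev:
  fixes f g :: "real \<Rightarrow> real"
  assumes "eventually (\<lambda>y. f y = g y) (nhds x)" "f differentiable (at x)"
  shows "g differentiable (at x)"
proof -
  have "DERIV f x :> deriv f x" using assms(2) DERIV_deriv_iff_real_differentiable by blast
  hence "DERIV g x :> deriv f x" using DERIV_cong_ev[OF refl assms(1) refl] by blast
  thus ?thesis using real_differentiable_def by blast
qed

lemma higher_deriv_cong_on:
  fixes f g :: "real \<Rightarrow> real"
  assumes "open J" "\<forall>y\<in>J. f y = g y" "x \<in> J"
  shows "(deriv ^^ n) f x = (deriv ^^ n) g x"
  by (rule higher_deriv_cong_ev[OF ev_open[OF assms(1,3,2)] refl])

lemma smooth_cong: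
  assumes "open J" "\<forall>y\<in>J. f y = g y" "smooth_on J f"
  shows "smooth_on J g"
  unfolding smooth_on_def
proof (intro allI ballI)
  fix n x assume x: "x \<in> J"
  have "\<forall>y\<in>J. (deriv ^^ n) f y = (deriv ^^ n) g y"
    using higher_deriv_cong_on[OF assms(1,2)] by blast
  thus "(deriv ^^ n) g differentiable at x"
    using diff_cong_ev[OF ev_open[OF assms(1) x]] assms(3) x unfolding smooth_on_def by blast
qed

lemma smooth_diff: "smooth_on J f \<Longrightarrow> x \<in> J \<Longrightarrow> f differentiable (at x)"
  unfolding smooth_on_def by (metis funpow_0)

lemma smooth_DERIV: "smooth_on J f \<Longrightarrow> x \<in> J \<Longrightarrow> DERIV f x :> deriv f x"
  using smooth_diff DERIV_deriv_iff_real_differentiable by blast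

lemma smooth_deriv: "smooth_on J f \<Longrightarrow> smooth_on J (deriv f)"
  unfolding smooth_on_def by (metis funpow_Suc_right o_apply)

lemma smooth_const: "smooth_on J (\<lambda>x. c)"
proof -
  have "(deriv ^^ n) (\<lambda>x. c) = (\<lambda>x. if n = 0 then c else 0)" for n
    by (induction n) auto
  thus ?thesis unfolding smooth_on_def by simp
qed

lemma hd_add:
  fixes f g :: "real \<Rightarrow> real"
  assumes "open J"
    and "\<forall>m<k. \<forall>x\<in>J. (deriv ^^ m) f differentiable (at x)"
    and "\<forall>m<k. \<forall>x\<in>J. (deriv ^^ m) g differentiable (at x)"
  shows "\<forall>x\<in>J. (deriv ^^ k) (\<lambda>x. f x + g x) x = (deriv ^^ k) f x + (deriv ^^ k) g x"
  using assms(2,3)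
proof (induction k)
  case 0 then show ?case by simp
next
  case (Suc k)
  have IH: "\<forall>x\<in>J. (deriv ^^ k) (\<lambda>x. f x + g x) x = (deriv ^^ k) f x + (deriv ^^ k) g x"
    using Suc by auto
  show ?case
  proof
    fix x assume x: "x \<in> J"
    have "deriv ((deriv ^^ k) (\<lambda>x. f x + g x)) x = deriv (\<lambda>y. (deriv ^^ k) f y + (deriv ^^ k) g y) x"
      by (rule deriv_cong_ev[OF ev_open[OF assms(1) x IH] refl])
    also have "\<dots> = deriv ((deriv ^^ k) f) x + deriv ((deriv ^^ k) g) x"
    proof -
      have "DERIV ((deriv ^^ k) f) x :> deriv ((deriv ^^ k) f) x"
        using Suc.prems(1) x DERIV_deriv_iff_real_differentiable by blast
      moreover have "DERIV ((deriv ^^ k) g) x :> deriv ((deriv ^^ k) g) x"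
        using Suc.prems(2) x DERIV_deriv_iff_real_differentiable by blast
      ultimately show ?thesis by (intro DERIV_imp_deriv derivative_eq_intros) auto
    qed
    finally show "(deriv ^^ Suc k) (\<lambda>x. f x + g x) x = (deriv ^^ Suc k) f x + (deriv ^^ Suc k) g x"
      by simp
  qed
qed

lemma smooth_add:
  assumes "open J" "smooth_on J f" "smooth_on J g"
  shows "smooth_on J (\<lambda>x. f x + g x)"
  unfolding smooth_on_def
proof (intro allI ballI)
  fix n x assume x: "x \<in> J"
  have e: "\<forall>y\<in>J. (deriv ^^ n) (\<lambda>x. f x + g x) y = (deriv ^^ n) f y + (deriv ^^ n) g y"
    using hd_add[OF assms(1)] assms(2,3) unfolding smooth_on_def by blast
  have "(\<lambda>y. (deriv ^^ n) f y + (deriv ^^ n) g y) differentiable (at x)"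
    using assms(2,3) x unfolding smooth_on_def by (intro differentiable_add) auto
  thus "(deriv ^^ n) (\<lambda>x. f x + g x) differentiable (at x)"
    using diff_cong_ev[OF ev_open[OF assms(1) x, of "\<lambda>y. (deriv ^^ n) f y + (deriv ^^ n) g y"]] e
    by auto
qed

lemma mult_aux:
  fixes f g :: "real \<Rightarrow> real"
  assumes "open J"
  shows "\<forall>f g. smooth_on J f \<and> smooth_on J g \<longrightarrow>
     (\<forall>m\<le>k. \<forall>x\<in>J. (deriv ^^ m) (\<lambda>x. f x * g x) differentiable (at x))"
proof (induction k)
  case 0
  then show ?case using smooth_diff by (auto intro!: differentiable_mult)
next
  case (Suc k)
  show ?case
  proof (intro allI impI ballI)
    fix f g m x
    assume fg: "smooth_on J f \<and> smooth_on J g" and m: "m \<le> Suc k" and x: "x \<in> J"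
    show "(deriv ^^ m) (\<lambda>x. f x * g x) differentiable (at x)"
    proof (cases m)
      case 0 then show ?thesis using fg x smooth_diff by (auto intro!: differentiable_mult)
    next
      case (Suc m')
      have m': "m' \<le> k" using m Suc by simp
      have sf': "smooth_on J (deriv f)" and sg': "smooth_on J (deriv g)"
        using fg smooth_deriv by auto
      have d1: "\<forall>y\<in>J. deriv (\<lambda>x. f x * g x) y = deriv f y * g y + f y * deriv g y"
      proof
        fix y assume y: "y \<in> J"
        show "deriv (\<lambda>x. f x * g x) y = deriv f y * g y + f y * deriv g y"
          using smooth_DERIV[OF conjunct1[OF fg] y] smooth_DERIV[OF conjunct2[OF fg] y]
          by (intro DERIV_imp_deriv) (auto intro!: derivative_eq_intros)
      qed
      have A: "\<forall>i\<le>k. \<forall>y\<in>J. (deriv ^^ i) (\<lambda>x. deriv f x * g x) differentiable (at y)"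
        using Suc.IH sf' fg by blast
      have B: "\<forall>i\<le>k. \<forall>y\<in>J. (deriv ^^ i) (\<lambda>x. f x * deriv g x) differentiable (at y)"
        using Suc.IH sg' fg by blast
      have e1: "\<forall>y\<in>J. (deriv ^^ m') (deriv (\<lambda>x. f x * g x)) y
            = (deriv ^^ m') (\<lambda>x. deriv f x * g x + f x * deriv g x) y"
        using higher_deriv_cong_on[OF assms d1] by blast
      have e2: "\<forall>y\<in>J. (deriv ^^ m') (\<lambda>x. deriv f x * g x + f x * deriv g x) y
           = (deriv ^^ m') (\<lambda>x. deriv f x * g x) y + (deriv ^^ m') (\<lambda>x. f x * deriv g x) y"
        using hd_add[OF assms, of m' "\<lambda>x. deriv f x * g x" "\<lambda>x. f x * deriv g x"] A B m' by auto
      have "(\<lambda>y. (deriv ^^ m') (\<lambda>x. deriv f x * g x) y + (deriv ^^ m') (\<lambda>x. f x * deriv g x) y)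
             differentiable (at x)"
        using A B m' x by (intro differentiable_add) auto
      hence "(deriv ^^ m') (deriv (\<lambda>x. f x * g x)) differentiable (at x)"
        using diff_cong_ev[OF ev_open[OF assms x]] e1 e2 by (metis (no_types, lifting))
      thus ?thesis using Suc by (simp only: funpow_Suc_right o_apply)
    qed
  qed
qed

lemma smooth_mult:
  assumes "open J" "smooth_on J f" "smooth_on J g"
  shows "smooth_on J (\<lambda>x. f x * g x)"
  using mult_aux[OF assms(1)] assms(2,3) unfolding smooth_on_def by blast

definition X2 :: "(real\<Rightarrow>real) \<Rightarrow> (real\<Rightarrow>real\<Rightarrow>real) \<Rightarrow> real\<Rightarrow>real\<Rightarrow>real" where
  "X2 F g = (\<lambda>\<psi> p. p * deriv (\<lambda>x. g x p) \<psi> - deriv F \<psi> * deriv (\<lambda>y. g \<psi> y) p)"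

definition pev :: "((real\<Rightarrow>real)\<times>nat) list \<Rightarrow> real \<Rightarrow> real \<Rightarrow> real" where
  "pev cs \<psi> p = (\<Sum>(a,e)\<leftarrow>cs. a \<psi> * p^e)"

definition xstep :: "(real\<Rightarrow>real) \<Rightarrow> ((real\<Rightarrow>real)\<times>nat) list \<Rightarrow> ((real\<Rightarrow>real)\<times>nat) list" where
  "xstep F cs = concat (map (\<lambda>(a,e). [(deriv a, Suc e), (\<lambda>\<psi>. (- real e) * (deriv F \<psi> * a \<psi>), e - 1)]) cs)"

lemma pev_Nil[simp]: "pev [] \<psi> p = 0" by (simp add: pev_def)
lemma pev_Cons[simp]: "pev ((a,e)#cs) \<psi> p = a \<psi> * p^e + pev cs \<psi> p" by (simp add: pev_def)
lemma pev_append[simp]: "pev (xs @ ys) \<psi> p = pev xs \<psi> p + pev ys \<psi> p" by (simp add: pev_def)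
lemma xstep_Nil[simp]: "xstep F [] = []" by (simp add: xstep_def)
lemma xstep_Cons[simp]: "xstep F ((a,e)#cs) =
   [(deriv a, Suc e), (\<lambda>\<psi>. (- real e) * (deriv F \<psi> * a \<psi>), e - 1)] @ xstep F cs"
  by (simp add: xstep_def)

lemma pev_dx:
  "\<forall>(a,e)\<in>set cs. smooth_on J a \<Longrightarrow> \<psi> \<in> J \<Longrightarrow>
   ((\<lambda>x. pev cs x p) has_real_derivative (\<Sum>(a,e)\<leftarrow>cs. deriv a \<psi> * p^e)) (at \<psi>)"
proof (induction cs)
  case Nil then show ?case by simp
next
  case (Cons c cs)
  obtain a e where c: "c = (a,e)" by fastforce
  have "DERIV a \<psi> :> deriv a \<psi>" using Cons.prems c smooth_DERIV by auto
  then show ?case using Cons c by (auto intro!: derivative_eq_intros)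
qed

lemma pev_dy:
  "((\<lambda>y. pev cs \<psi> y) has_real_derivative (\<Sum>(a,e)\<leftarrow>cs. a \<psi> * (real e * p^(e-1)))) (at p)"
proof (induction cs)
  case Nil then show ?case by simp
next
  case (Cons c cs)
  obtain a e where c: "c = (a,e)" by fastforce
  show ?case using DERIV_add[OF DERIV_cmult[OF DERIV_pow[of e p]] Cons.IH, of "a \<psi>"] c by simp
qed

lemma xstep_eq: "pev (xstep F cs) \<psi> p = p * (\<Sum>(a,e)\<leftarrow>cs. deriv a \<psi> * p^e)
     - deriv F \<psi> * (\<Sum>(a,e)\<leftarrow>cs. a \<psi> * (real e * p^(e-1)))"
proof (induction cs)
  case Nil then show ?case by simp
next
  case (Cons c cs)
  obtain a e where c: "c = (a,e)" by fastforce
  show ?case using Cons c by (simp add: algebra_simps)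
qed

lemma X2_pev:
  assumes "open J" "\<forall>(a,e)\<in>set cs. smooth_on J a" "\<forall>x\<in>J. \<forall>y. g x y = pev cs x y" "\<psi> \<in> J"
  shows "X2 F g \<psi> p = pev (xstep F cs) \<psi> p"
proof -
  have "deriv (\<lambda>x. g x p) \<psi> = deriv (\<lambda>x. pev cs x p) \<psi>"
    by (rule deriv_cong_ev[OF ev_open[OF assms(1,4)] refl]) (use assms(3) in auto)
  also have "\<dots> = (\<Sum>(a,e)\<leftarrow>cs. deriv a \<psi> * p^e)"
    by (rule DERIV_imp_deriv[OF pev_dx[OF assms(2,4)]])
  finally have 1: "deriv (\<lambda>x. g x p) \<psi> = (\<Sum>(a,e)\<leftarrow>cs. deriv a \<psi> * p^e)" .
  have "(\<lambda>y. g \<psi> y) = (\<lambda>y. pev cs \<psi> y)" using assms(3,4) by auto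
  hence 2: "deriv (\<lambda>y. g \<psi> y) p = (\<Sum>(a,e)\<leftarrow>cs. a \<psi> * (real e * p^(e-1)))"
    using DERIV_imp_deriv[OF pev_dy] by simp
  show ?thesis unfolding X2_def xstep_eq 1 2 by simp
qed

lemma xstep_smooth:
  assumes "open J" "smooth_on J F" "\<forall>(a,e)\<in>set cs. smooth_on J a"
  shows "\<forall>(a,e)\<in>set (xstep F cs). smooth_on J a"
  using assms(3)
proof (induction cs)
  case Nil then show ?case by simp
next
  case (Cons c cs)
  obtain a e where c: "c = (a,e)" by fastforce
  have sa: "smooth_on J a" using Cons.prems c by auto
  have "smooth_on J (\<lambda>\<psi>. (- real e) * (deriv F \<psi> * a \<psi>))"
    by (intro smooth_mult[OF assms(1)] smooth_const smooth_deriv assms(2) sa)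
  then show ?case using Cons c sa smooth_deriv by auto
qed

definition gs :: "(real\<Rightarrow>real) \<Rightarrow> (real\<Rightarrow>real) \<Rightarrow> nat \<Rightarrow> real\<Rightarrow>real\<Rightarrow>real" where
  "gs F G j = (X2 F ^^ j) (\<lambda>\<psi> p. G \<psi>)"

definition css :: "(real\<Rightarrow>real) \<Rightarrow> (real\<Rightarrow>real) \<Rightarrow> nat \<Rightarrow> ((real\<Rightarrow>real)\<times>nat) list" where
  "css F G j = (xstep F ^^ j) [(G,0)]"

lemma gs_0: "gs F G 0 = (\<lambda>\<psi> p. G \<psi>)" by (simp add: gs_def)
lemma gs_Suc: "gs F G (Suc j) = X2 F (gs F G j)" by (simp add: gs_def)

lemma gs_pev:
  assumes "open J" "smooth_on J F" "smooth_on J G"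
  shows "(\<forall>(a,e)\<in>set (css F G j). smooth_on J a) \<and> (\<forall>x\<in>J. \<forall>y. gs F G j x y = pev (css F G j) x y)"
proof (induction j)
  case 0 then show ?case using assms by (simp add: gs_def css_def)
next
  case (Suc j)
  have c: "css F G (Suc j) = xstep F (css F G j)" by (simp add: css_def)
  have s1: "\<forall>(a,e)\<in>set (css F G (Suc j)). smooth_on J a"
    unfolding c by (rule xstep_smooth[OF assms(1,2)]) (use Suc in blast)
  have s2: "\<forall>x\<in>J. \<forall>y. gs F G (Suc j) x y = pev (css F G (Suc j)) x y"
  proof (intro ballI allI)
    fix x y assume x: "x \<in> J"
    show "gs F G (Suc j) x y = pev (css F G (Suc j)) x y"
      unfolding c gs_Suc by (rule X2_pev[OF assms(1) _ _ x]) (use Suc in blast)+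
  qed
  show ?case using s1 s2 by blast
qed

lemma gs_dx:
  assumes "open J" "smooth_on J F" "smooth_on J G" "\<psi> \<in> J"
  shows "((\<lambda>x. gs F G j x p) has_real_derivative deriv (\<lambda>x. gs F G j x p) \<psi>) (at \<psi>)"
proof -
  have e: "eventually (\<lambda>x. pev (css F G j) x p = gs F G j x p) (nhds \<psi>)"
    by (rule ev_open[OF assms(1,4)]) (use gs_pev[OF assms(1-3)] in auto)
  have sm: "\<forall>(a,e)\<in>set (css F G j). smooth_on J a" using gs_pev[OF assms(1-3)] by blast
  have d: "((\<lambda>x. pev (css F G j) x p) has_real_derivative
     (\<Sum>(a,e)\<leftarrow>css F G j. deriv a \<psi> * p^e)) (at \<psi>)"
    by (rule pev_dx[OF sm assms(4)])
  have h: "((\<lambda>x. gs F G j x p) has_real_derivative (\<Sum>(a,e)\<leftarrow>css F G j. deriv a \<psi> * p^e)) (at \<psi>)"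
    using DERIV_cong_ev[OF refl e refl] d by blast
  show ?thesis using h unfolding DERIV_imp_deriv[OF h] .
qed

lemma gs_dy:
  assumes "open J" "smooth_on J F" "smooth_on J G" "\<psi> \<in> J"
  shows "((\<lambda>y. gs F G j \<psi> y) has_real_derivative deriv (\<lambda>y. gs F G j \<psi> y) p) (at p)"
proof -
  have "(\<lambda>y. gs F G j \<psi> y) = (\<lambda>y. pev (css F G j) \<psi> y)" using gs_pev[OF assms(1-3)] assms(4) by auto
  moreover have "((\<lambda>y. pev (css F G j) \<psi> y) has_real_derivative deriv (\<lambda>y. pev (css F G j) \<psi> y) p) (at p)"
    using pev_dy[of "css F G j" \<psi> p] DERIV_imp_deriv[OF pev_dy[of "css F G j" \<psi> p]] by simp
  ultimately show ?thesis by simp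
qed

lemma binom_step:
  fixes x y :: real and g :: "nat \<Rightarrow> real"
  shows "x * (\<Sum>j\<le>n. (real (n choose j) * x^(n-j) * y^j) * g j)
       + y * (\<Sum>j\<le>n. (real (n choose j) * x^(n-j) * y^j) * g (Suc j))
       = (\<Sum>j\<le>Suc n. (real (Suc n choose j) * x^(Suc n - j) * y^j) * g j)"
proof -
  have A: "x * (\<Sum>j\<le>n. (real (n choose j) * x^(n-j) * y^j) * g j)
      = (\<Sum>j\<le>Suc n. (real (n choose j) * x^(Suc n-j) * y^j) * g j)"
  proof -
    have "x * (\<Sum>j\<le>n. (real (n choose j) * x^(n-j) * y^j) * g j)
        = (\<Sum>j\<le>n. (real (n choose j) * x^(Suc n-j) * y^j) * g j)"
      unfolding sum_distrib_left
      by (rule sum.cong[OF refl]) (simp add: Suc_diff_le)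
    also have "\<dots> = (\<Sum>j\<le>Suc n. (real (n choose j) * x^(Suc n-j) * y^j) * g j)"
      by simp
    finally show ?thesis .
  qed
  have B: "y * (\<Sum>j\<le>n. (real (n choose j) * x^(n-j) * y^j) * g (Suc j))
      = (\<Sum>j\<le>n. (real (n choose j) * x^(n-j) * y^(Suc j)) * g (Suc j))"
    unfolding sum_distrib_left by (rule sum.cong[OF refl]) simp
  have "(\<Sum>j\<le>Suc n. (real (Suc n choose j) * x^(Suc n - j) * y^j) * g j)
      = x^(Suc n) * g 0 + (\<Sum>j\<le>n. (real (Suc n choose Suc j) * x^(n - j) * y^(Suc j)) * g (Suc j))"
    by (subst sum.atMost_Suc_shift) simp
  also have "\<dots> = x^(Suc n) * g 0 + (\<Sum>j\<le>n. (real (n choose Suc j) * x^(n - j) * y^(Suc j)) * g (Suc j))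
       + (\<Sum>j\<le>n. (real (n choose j) * x^(n-j) * y^(Suc j)) * g (Suc j))"
    by (simp add: sum.distrib algebra_simps)
  also have "x^(Suc n) * g 0 + (\<Sum>j\<le>n. (real (n choose Suc j) * x^(n - j) * y^(Suc j)) * g (Suc j))
      = (\<Sum>j\<le>Suc n. (real (n choose j) * x^(Suc n-j) * y^j) * g j)"
    unfolding sum.atMost_Suc_shift[of "\<lambda>j. real (n choose j) * x^(Suc n - j) * y^j * g j" n] by simp
  finally show ?thesis using A B by simp
qed

lemma XL_closed:
  assumes J: "open J" "smooth_on J F" "smooth_on J G" "\<psi> \<in> J"
    and hyp: "\<forall>s \<psi>' q y. \<psi>' \<in> J \<longrightarrow> f s \<psi>' q y = (\<Sum>j\<le>n. c s q j * gs F G j \<psi>' y)"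
  shows "XL F f r \<psi> pr p = (\<Sum>j\<le>n. c r pr j * gs F G (Suc j) \<psi> p)"
proof -
  have "deriv (\<lambda>x. f r x pr p) \<psi> = deriv (\<lambda>x. \<Sum>j\<le>n. c r pr j * gs F G j x p) \<psi>"
    by (rule deriv_cong_ev[OF ev_open[OF J(1,4)] refl]) (use hyp in auto)
  also have "\<dots> = (\<Sum>j\<le>n. c r pr j * deriv (\<lambda>x. gs F G j x p) \<psi>)"
    by (intro DERIV_imp_deriv DERIV_sum DERIV_cmult gs_dx[OF J])
  finally have 1: "deriv (\<lambda>x. f r x pr p) \<psi> = (\<Sum>j\<le>n. c r pr j * deriv (\<lambda>x. gs F G j x p) \<psi>)" .
  have "(\<lambda>y. f r \<psi> pr y) = (\<lambda>y. \<Sum>j\<le>n. c r pr j * gs F G j \<psi> y)" using hyp J(4) by auto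
  hence "deriv (\<lambda>y. f r \<psi> pr y) p = deriv (\<lambda>y. \<Sum>j\<le>n. c r pr j * gs F G j \<psi> y) p" by simp
  also have "\<dots> = (\<Sum>j\<le>n. c r pr j * deriv (\<lambda>y. gs F G j \<psi> y) p)"
    by (intro DERIV_imp_deriv DERIV_sum DERIV_cmult gs_dy[OF J])
  finally have 2: "deriv (\<lambda>y. f r \<psi> pr y) p = (\<Sum>j\<le>n. c r pr j * deriv (\<lambda>y. gs F G j \<psi> y) p)" .
  show ?thesis unfolding XL_def 1 2 gs_Suc X2_def
    by (simp add: sum_distrib_left sum_subtractf algebra_simps)
qed

lemma Ilam_closed:
  assumes J: "open J" "smooth_on J F" "smooth_on J G"
  shows "\<forall>r \<psi> pr p. \<psi> \<in> J \<longrightarrow> Ilam n \<mu> F G r \<psi> pr p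
     = (\<Sum>j\<le>n. (real (n choose j) * pr^(n-j) * (\<mu>/r)^j) * gs F G j \<psi> p)"
proof (induction n)
  case 0 then show ?case by (simp add: Ilam_def gs_0)
next
  case (Suc n)
  show ?case
  proof (intro allI impI)
    fix r \<psi> pr p assume \<psi>: "\<psi> \<in> J"
    have "Ilam (Suc n) \<mu> F G = Uop \<mu> F (Ilam n \<mu> F G)" by (simp add: Ilam_def)
    hence "Ilam (Suc n) \<mu> F G r \<psi> pr p = pr * Ilam n \<mu> F G r \<psi> pr p + \<mu>/r * XL F (Ilam n \<mu> F G) r \<psi> pr p"
      by (simp add: Uop_def)
    also have "XL F (Ilam n \<mu> F G) r \<psi> pr p
       = (\<Sum>j\<le>n. (real (n choose j) * pr^(n-j) * (\<mu>/r)^j) * gs F G (Suc j) \<psi> p)"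
      by (rule XL_closed[OF J \<psi>, where c="\<lambda>s q j. real (n choose j) * q^(n-j) * (\<mu>/s)^j"]) (use Suc.IH in blast)
    finally show "Ilam (Suc n) \<mu> F G r \<psi> pr p
      = (\<Sum>j\<le>Suc n. (real (Suc n choose j) * pr^(Suc n-j) * (\<mu>/r)^j) * gs F G j \<psi> p)"
      using Suc.IH \<psi> binom_step[of pr n "\<mu>/r" "\<lambda>j. gs F G j \<psi> p"] by simp
  qed
qed

lemma d1: fixes r :: real assumes "r > 0" shows "((\<lambda>s. \<mu> / s) has_real_derivative (- \<mu> / r^2)) (at r)"
  using assms by (auto intro!: derivative_eq_intros simp: power2_eq_square field_simps)
lemma d2: fixes r :: real assumes "r > 0" shows "((\<lambda>s. (\<mu> / s)^j) has_real_derivative (real j * (\<mu>/r)^(j-1) * (- \<mu> / r^2))) (at r)"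
  using DERIV_power[OF d1[OF assms, where \<mu>=\<mu>], where n=j] by (simp add: mult_ac)
lemma d3: fixes q :: real shows "((\<lambda>q. q^k) has_real_derivative (real k * q^(k-1))) (at q)"
  using DERIV_pow[of k q] by simp

lemma XH_sums:
  assumes J: "open J" "smooth_on J F" "smooth_on J G" "\<psi> \<in> J" and r: "r > 0"
  shows "XH F (Ilam n \<mu> F G) r \<psi> pr p =
    pr * (\<Sum>j\<le>n. (real (n choose j) * pr^(n-j) * (real j * (\<mu>/r)^(j-1) * (- \<mu> / r^2))) * gs F G j \<psi> p)
  + 2 * (p\<^sup>2/2 + F \<psi>) / r^3 * (\<Sum>j\<le>n. (real (n choose j) * (real (n-j) * pr^(n-j-1)) * (\<mu>/r)^j) * gs F G j \<psi> p)
  + (\<Sum>j\<le>n. (real (n choose j) * pr^(n-j) * (\<mu>/r)^j) * gs F G (Suc j) \<psi> p) / r\<^sup>2"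
proof -
  note cl = Ilam_closed[OF J(1-3), of n \<mu>]
  have "(\<lambda>s. Ilam n \<mu> F G s \<psi> pr p) = (\<lambda>s. \<Sum>j\<le>n. (real (n choose j) * pr^(n-j) * (\<mu>/s)^j) * gs F G j \<psi> p)"
    using cl J(4) by auto
  moreover have "((\<lambda>s. \<Sum>j\<le>n. (real (n choose j) * pr^(n-j) * (\<mu>/s)^j) * gs F G j \<psi> p) has_real_derivative
     (\<Sum>j\<le>n. (real (n choose j) * pr^(n-j) * (real j * (\<mu>/r)^(j-1) * (- \<mu> / r^2))) * gs F G j \<psi> p)) (at r)"
    by (rule DERIV_sum, rule DERIV_cmult_right, rule DERIV_cmult, rule d2[OF r])
  ultimately have 1: "deriv (\<lambda>s. Ilam n \<mu> F G s \<psi> pr p) r =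
     (\<Sum>j\<le>n. (real (n choose j) * pr^(n-j) * (real j * (\<mu>/r)^(j-1) * (- \<mu> / r^2))) * gs F G j \<psi> p)"
    using DERIV_imp_deriv by (metis (no_types, lifting))
  have "(\<lambda>q. Ilam n \<mu> F G r \<psi> q p) = (\<lambda>q. \<Sum>j\<le>n. (real (n choose j) * q^(n-j) * (\<mu>/r)^j) * gs F G j \<psi> p)"
    using cl J(4) by auto
  moreover have "((\<lambda>q. \<Sum>j\<le>n. (real (n choose j) * q^(n-j) * (\<mu>/r)^j) * gs F G j \<psi> p) has_real_derivative
     (\<Sum>j\<le>n. (real (n choose j) * (real (n-j) * pr^(n-j-1)) * (\<mu>/r)^j) * gs F G j \<psi> p)) (at pr)"
    by (rule DERIV_sum, rule DERIV_cmult_right, rule DERIV_cmult_right, rule DERIV_cmult, rule d3)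
  ultimately have 2: "deriv (\<lambda>q. Ilam n \<mu> F G r \<psi> q p) pr =
     (\<Sum>j\<le>n. (real (n choose j) * (real (n-j) * pr^(n-j-1)) * (\<mu>/r)^j) * gs F G j \<psi> p)"
    using DERIV_imp_deriv by (metis (no_types, lifting))
  have 3: "XL F (Ilam n \<mu> F G) r \<psi> pr p = (\<Sum>j\<le>n. (real (n choose j) * pr^(n-j) * (\<mu>/r)^j) * gs F G (Suc j) \<psi> p)"
    by (rule XL_closed[OF J, where c="\<lambda>s q j. real (n choose j) * q^(n-j) * (\<mu>/s)^j"]) (use cl in blast)
  show ?thesis unfolding XH_def 1 2 3 Lfun_def by simp
qed

definition KK :: "nat \<Rightarrow> real \<Rightarrow> real \<Rightarrow> (nat \<Rightarrow> real) \<Rightarrow> nat \<Rightarrow> real" where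
  "KK n \<mu> Lv g m = - (real m * real (n choose m) * \<mu>^m) * g m
    + (if 1 \<le> m then real (n choose (m-1)) * \<mu>^(m-1) * g m else 0)
    + (if 2 \<le> m then 2 * Lv * real (n+2-m) * real (n choose (m-2)) * \<mu>^(m-2) * g (m-2) else 0)"

lemma S1_eq:
  fixes r x :: real assumes r: "r > 0"
  shows "x * (\<Sum>j\<le>n. (real (n choose j) * x^(n-j) * (real j * (\<mu>/r)^(j-1) * (- \<mu> / r^2))) * g j)
     = (\<Sum>m\<le>Suc n. x^(Suc n - m) * ((- (real m * real (n choose m) * \<mu>^m) * g m) / r^(m+1)))"
proof -
  have "x * (\<Sum>j\<le>n. (real (n choose j) * x^(n-j) * (real j * (\<mu>/r)^(j-1) * (- \<mu> / r^2))) * g j)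
      = (\<Sum>m\<le>n. x^(Suc n - m) * ((- (real m * real (n choose m) * \<mu>^m) * g m) / r^(m+1)))"
    unfolding sum_distrib_left
  proof (rule sum.cong[OF refl])
    fix j assume j: "j \<in> {..n}"
    show "x * ((real (n choose j) * x^(n-j) * (real j * (\<mu>/r)^(j-1) * (- \<mu> / r^2))) * g j)
      = x^(Suc n - j) * ((- (real j * real (n choose j) * \<mu>^j) * g j) / r^(j+1))"
    proof (cases j)
      case 0 then show ?thesis by simp
    next
      case (Suc i)
      have e1: "x^(Suc n - j) = x * x^(n-j)" using j by (simp add: Suc_diff_le)
      have e2: "real j * (\<mu>/r)^(j-1) * (- \<mu> / r^2) = - (real j * \<mu>^j / r^(j+1))"
        using Suc r by (simp add: power_divide field_simps power2_eq_square)
      show ?thesis unfolding e1 e2 using r by (simp add: field_simps)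
    qed
  qed
  also have "\<dots> = (\<Sum>m\<le>Suc n. x^(Suc n - m) * ((- (real m * real (n choose m) * \<mu>^m) * g m) / r^(m+1)))"
    by simp
  finally show ?thesis .
qed

lemma S3_eq:
  fixes r x :: real assumes r: "r > 0"
  shows "(\<Sum>j\<le>n. (real (n choose j) * x^(n-j) * (\<mu>/r)^j) * g (Suc j)) / r\<^sup>2
     = (\<Sum>m\<le>Suc n. x^(Suc n - m) * ((if 1 \<le> m then real (n choose (m-1)) * \<mu>^(m-1) * g m else 0) / r^(m+1)))"
proof -
  have "(\<Sum>m\<le>Suc n. x^(Suc n - m) * ((if 1 \<le> m then real (n choose (m-1)) * \<mu>^(m-1) * g m else 0) / r^(m+1)))
     = (\<Sum>j\<le>n. x^(n - j) * ((real (n choose j) * \<mu>^j * g (Suc j)) / r^(j+2)))"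
    by (subst sum.atMost_Suc_shift) simp
  also have "\<dots> = (\<Sum>j\<le>n. (real (n choose j) * x^(n-j) * (\<mu>/r)^j) * g (Suc j)) / r\<^sup>2"
    unfolding sum_divide_distrib using r
    by (intro sum.cong refl) (simp add: power_divide field_simps power2_eq_square)
  finally show ?thesis by simp
qed

lemma S2_eq:
  fixes r x :: real assumes r: "r > 0"
  shows "2 * Lv / r^3 * (\<Sum>j\<le>n. (real (n choose j) * (real (n-j) * x^(n-j-1)) * (\<mu>/r)^j) * g j)
     = (\<Sum>m\<le>Suc n. x^(Suc n - m) * ((if 2 \<le> m then 2 * Lv * real (n+2-m) * real (n choose (m-2)) * \<mu>^(m-2) * g (m-2) else 0) / r^(m+1)))"
proof -
  have "(\<Sum>m\<le>Suc n. x^(Suc n - m) * ((if 2 \<le> m then 2 * Lv * real (n+2-m) * real (n choose (m-2)) * \<mu>^(m-2) * g (m-2) else 0) / r^(m+1)))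
     = (\<Sum>j<n. x^(n - Suc j) * ((2 * Lv * real (n-j) * real (n choose j) * \<mu>^j * g j) / r^(j+3)))"
    by (subst sum.atMost_Suc_shift, subst sum.atMost_shift) (simp add: numeral_3_eq_3)
  also have "\<dots> = (\<Sum>j\<le>n. x^(n - Suc j) * ((2 * Lv * real (n-j) * real (n choose j) * \<mu>^j * g j) / r^(j+3)))"
    by (simp add: lessThan_Suc_atMost[symmetric])
  also have "\<dots> = 2 * Lv / r^3 * (\<Sum>j\<le>n. (real (n choose j) * (real (n-j) * x^(n-j-1)) * (\<mu>/r)^j) * g j)"
    unfolding sum_distrib_left using r
    by (intro sum.cong refl) (simp add: power_divide field_simps power_add)
  finally show ?thesis by simp
qed

lemma XH_poly:
  assumes J: "open J" "smooth_on J F" "smooth_on J G" "\<psi> \<in> J" and r: "r > 0"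
  shows "XH F (Ilam n \<mu> F G) r \<psi> pr p =
    (\<Sum>m\<le>Suc n. pr^(Suc n - m) * (KK n \<mu> (p\<^sup>2/2 + F \<psi>) (\<lambda>j. gs F G j \<psi> p) m / r^(m+1)))"
proof -
  let ?g = "\<lambda>j. gs F G j \<psi> p"
  let ?Lv = "p\<^sup>2/2 + F \<psi>"
  have "XH F (Ilam n \<mu> F G) r \<psi> pr p =
    (\<Sum>m\<le>Suc n. pr^(Suc n - m) * ((- (real m * real (n choose m) * \<mu>^m) * ?g m) / r^(m+1)))
  + (\<Sum>m\<le>Suc n. pr^(Suc n - m) * ((if 2 \<le> m then 2 * ?Lv * real (n+2-m) * real (n choose (m-2)) * \<mu>^(m-2) * ?g (m-2) else 0) / r^(m+1)))
  + (\<Sum>m\<le>Suc n. pr^(Suc n - m) * ((if 1 \<le> m then real (n choose (m-1)) * \<mu>^(m-1) * ?g m else 0) / r^(m+1)))"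
    unfolding XH_sums[OF J r] S1_eq[OF r, of pr n \<mu> ?g, symmetric]
      S2_eq[OF r, of ?Lv n pr \<mu> ?g, symmetric] S3_eq[OF r, of n pr \<mu> ?g, symmetric]
    by simp
  also have "\<dots> = (\<Sum>m\<le>Suc n. pr^(Suc n - m) * ((- (real m * real (n choose m) * \<mu>^m) * ?g m) / r^(m+1))
     + pr^(Suc n - m) * ((if 2 \<le> m then 2 * ?Lv * real (n+2-m) * real (n choose (m-2)) * \<mu>^(m-2) * ?g (m-2) else 0) / r^(m+1))
     + pr^(Suc n - m) * ((if 1 \<le> m then real (n choose (m-1)) * \<mu>^(m-1) * ?g m else 0) / r^(m+1)))"
    by (simp only: sum.distrib)
  also have "\<dots> = (\<Sum>m\<le>Suc n. pr^(Suc n - m) * (KK n \<mu> ?Lv ?g m / r^(m+1)))"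
    unfolding KK_def by (intro sum.cong refl) (simp add: add_divide_distrib distrib_left diff_divide_distrib right_diff_distrib)
  finally show ?thesis .
qed

lemma sum_rev_pow:
  fixes a :: "nat \<Rightarrow> real"
  shows "(\<Sum>m\<le>N. x^(N-m) * a m) = (\<Sum>i\<le>N. a (N-i) * x^i)"
  by (rule sum.reindex_bij_witness[where i="\<lambda>i. N - i" and j="\<lambda>m. N - m"]) auto

lemma XH_zero_iff:
  assumes J: "open J" "smooth_on J F" "smooth_on J G" "\<psi> \<in> J" and r: "r > 0"
  shows "(\<forall>pr. XH F (Ilam n \<mu> F G) r \<psi> pr p = 0) \<longleftrightarrow>
     (\<forall>m\<le>Suc n. KK n \<mu> (p\<^sup>2/2 + F \<psi>) (\<lambda>j. gs F G j \<psi> p) m = 0)"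
proof -
  let ?a = "\<lambda>m. KK n \<mu> (p\<^sup>2/2 + F \<psi>) (\<lambda>j. gs F G j \<psi> p) m / r^(m+1)"
  have "(\<forall>pr. XH F (Ilam n \<mu> F G) r \<psi> pr p = 0) \<longleftrightarrow> (\<forall>pr. (\<Sum>i\<le>Suc n. ?a (Suc n - i) * pr^i) = 0)"
    unfolding XH_poly[OF J r] sum_rev_pow ..
  also have "\<dots> \<longleftrightarrow> (\<forall>i\<le>Suc n. ?a (Suc n - i) = 0)" by (rule polyfun_eq_0)
  also have "\<dots> \<longleftrightarrow> (\<forall>m\<le>Suc n. ?a m = 0)"
  proof
    assume h: "\<forall>i\<le>Suc n. ?a (Suc n - i) = 0"
    show "\<forall>m\<le>Suc n. ?a m = 0"
    proof (intro allI impI)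
      fix m assume "m \<le> Suc n"
      then show "?a m = 0" using h[rule_format, of "Suc n - m"] by simp
    qed
  qed auto
  also have "\<dots> \<longleftrightarrow> (\<forall>m\<le>Suc n. KK n \<mu> (p\<^sup>2/2 + F \<psi>) (\<lambda>j. gs F G j \<psi> p) m = 0)"
    using r by simp
  finally show ?thesis .
qed

lemma rot_id:
  fixes g h u v :: real
  assumes "u^2 + v^2 = 1"
  shows "(g * v - h * u) * v + (g * u + h * v) * u = g"
proof -
  have "(g * v - h * u) * v + (g * u + h * v) * u = g * (u^2 + v^2)" by (simp add: algebra_simps power2_eq_square)
  thus ?thesis using assms by simp
qed

lemma ode_sol:
  fixes w :: real and G G1 :: "real \<Rightarrow> real"
  assumes J: "convex J" and w: "w \<noteq> 0"
    and d1: "\<forall>x\<in>J. DERIV G x :> G1 x" and d2: "\<forall>x\<in>J. DERIV G1 x :> -(w^2) * G x"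
  shows "\<exists>a b. \<forall>x\<in>J. G x = a * cos (w*x) + b * sin (w*x)"
proof -
  define ua where "ua x = G x * cos (w*x) - G1 x / w * sin (w*x)" for x
  define ub where "ub x = G x * sin (w*x) + G1 x / w * cos (w*x)" for x
  have "\<exists>c. \<forall>x\<in>J. ua x = c"
  proof (rule has_field_derivative_zero_constant[OF J])
    fix x assume x: "x \<in> J"
    have "DERIV ua x :> 0"
    proof -
      have g: "DERIV G x :> G1 x" and g1: "DERIV G1 x :> -(w^2) * G x" using d1 d2 x by auto
      show ?thesis unfolding ua_def[abs_def]
        using w by (auto intro!: derivative_eq_intros g g1 simp: field_simps power2_eq_square)
    qed
    then show "(ua has_field_derivative 0) (at x within J)"
      using has_field_derivative_at_within by blast
  qed
  then obtain a where a: "\<forall>x\<in>J. ua x = a" by blast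
  have "\<exists>c. \<forall>x\<in>J. ub x = c"
  proof (rule has_field_derivative_zero_constant[OF J])
    fix x assume x: "x \<in> J"
    have "DERIV ub x :> 0"
    proof -
      have g: "DERIV G x :> G1 x" and g1: "DERIV G1 x :> -(w^2) * G x" using d1 d2 x by auto
      show ?thesis unfolding ub_def[abs_def]
        using w by (auto intro!: derivative_eq_intros g g1 simp: field_simps power2_eq_square)
    qed
    then show "(ub has_field_derivative 0) (at x within J)"
      using has_field_derivative_at_within by blast
  qed
  then obtain b where b: "\<forall>x\<in>J. ub x = b" by blast
  have "\<forall>x\<in>J. G x = a * cos (w*x) + b * sin (w*x)"
  proof
    fix x assume x: "x \<in> J"
    have sc: "(sin (w*x))^2 + (cos (w*x))^2 = 1" by simp
    have "ua x * cos (w*x) + ub x * sin (w*x) = G x"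
      unfolding ua_def ub_def by (rule rot_id[OF sc])
    thus "G x = a * cos (w*x) + b * sin (w*x)" using a b x by simp
  qed
  thus ?thesis by blast
qed

lemma polar:
  fixes a b :: real
  obtains A t where "A = sqrt (a^2 + b^2)" "a = A * cos t" "b = - (A * sin t)"
proof (cases "a^2 + b^2 = 0")
  case True
  then have "a = 0" "b = 0" by (auto simp: sum_power2_eq_zero_iff)
  then show ?thesis using that[of 0 0] by simp
next
  case False
  define A where "A = sqrt (a^2 + b^2)"
  have pos: "a^2 + b^2 > 0" using False sum_power2_ge_zero[of a b] by linarith
  have Ap: "A > 0" unfolding A_def using pos by simp
  have A2: "A^2 = a^2 + b^2" unfolding A_def by (rule real_sqrt_pow2) (simp add: sum_power2_ge_zero)
  have e: "(a/A)^2 + (-b/A)^2 = (a^2 + b^2) / A^2" by (simp only: power_divide power2_minus add_divide_distrib)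
  have pne: "a^2 + b^2 \<noteq> 0" using pos by linarith
  have "(a^2 + b^2) / A^2 = 1" using A2 pne by simp
  hence one: "(a/A)^2 + (-b/A)^2 = 1" using e by linarith
  obtain t where t: "a/A = cos t" "-b/A = sin t" using sincos_total_2pi[OF one] by blast
  have "a = A * cos t" using t(1) Ap by (simp add: divide_eq_eq mult.commute)
  moreover have "b = - (A * sin t)"
  proof -
    have "b / A = - sin t" using t(2) by (metis divide_minus_left minus_minus)
    hence "b = - sin t * A" using Ap by (simp add: divide_eq_eq)
    thus ?thesis by simp
  qed
  ultimately show ?thesis using that[of A t] A_def by blast
qed

lemma sin_zero_nbhd:
  fixes z u :: real
  assumes "sin z = 0" "0 < \<bar>u\<bar>" "\<bar>u\<bar> < pi"
  shows "sin (z + u) \<noteq> 0"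
proof -
  have "(cos z)^2 = 1" using sin_cos_squared_add[of z] assms(1) by simp
  hence c: "cos z \<noteq> 0" by auto
  have "sin u \<noteq> 0" using sin_eq_0_pi[of u] assms(2,3) by (auto simp: abs_less_iff)
  thus ?thesis using c assms(1) by (simp add: sin_add)
qed

lemma gs_1: "gs F G (Suc 0) \<psi> p = p * deriv G \<psi>"
  by (simp add: gs_Suc gs_0 X2_def)

lemma gs_1': "gs F G (Suc 0) = (\<lambda>\<psi> p. p * deriv G \<psi>)"
  using gs_1 by blast

lemma gs_2:
  assumes "smooth_on J G" "\<psi> \<in> J"
  shows "gs F G (Suc (Suc 0)) \<psi> p = p * p * deriv (deriv G) \<psi> - deriv F \<psi> * deriv G \<psi>"
proof -
  have d: "DERIV (deriv G) \<psi> :> deriv (deriv G) \<psi>"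
    using smooth_DERIV[OF smooth_deriv[OF assms(1)] assms(2)] .
  have 1: "deriv (\<lambda>x. p * deriv G x) \<psi> = p * deriv (deriv G) \<psi>"
    by (rule DERIV_imp_deriv[OF DERIV_cmult[OF d]])
  have 2: "deriv (\<lambda>y. y * deriv G \<psi>) p = deriv G \<psi>"
  proof -
    have "DERIV (\<lambda>y. y * deriv G \<psi>) p :> 1 * deriv G \<psi>" by (rule DERIV_cmult_right[OF DERIV_ident])
    thus ?thesis using DERIV_imp_deriv by fastforce
  qed
  show ?thesis unfolding gs_Suc[of F G "Suc 0"] gs_1' X2_def 1 2 by simp
qed

lemma KK_1: "KK n \<mu> Lv g (Suc 0) = (1 - real n * \<mu>) * g (Suc 0)"
  by (simp add: KK_def algebra_simps)

lemma choose2: "n \<ge> 1 \<Longrightarrow> real (n choose 2) * 2 = real n * (real n - 1)"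
proof -
  assume n: "n \<ge> 1"
  have "2 * (n choose 2) = n * ((n - 1) choose 1)" using times_binomial_minus1_eq[of 2 n] by simp
  hence "2 * (n choose 2) = n * (n - 1)" by simp
  hence "real (2 * (n choose 2)) = real (n * (n - 1))" by (simp only:)
  thus ?thesis using n by (simp add: of_nat_diff)
qed

lemma KK_2: "KK n \<mu> Lv g (Suc (Suc 0)) =
   - (2 * real (n choose 2) * \<mu>^2) * g (Suc (Suc 0)) + real n * \<mu> * g (Suc (Suc 0)) + 2 * Lv * real n * g 0"
  by (simp add: KK_def numeral_2_eq_2[symmetric])

lemma bin_id:
  assumes "k \<le> n"
  shows "real (n choose Suc k) * real (Suc k) = real (n choose k) * (real n - real k)"
proof -
  have "Suc n * (n choose k) = (Suc n choose Suc k) * Suc k" by (rule Suc_times_binomial_eq)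
  also have "\<dots> = (n choose k) * Suc k + (n choose Suc k) * Suc k" by (simp add: algebra_simps)
  finally have "real (Suc n * (n choose k)) = real ((n choose k) * Suc k + (n choose Suc k) * Suc k)"
    by (simp only:)
  hence "(real n + 1) * real (n choose k) = real (n choose k) * (real k + 1) + real (n choose Suc k) * (real k + 1)"
    by (simp add: algebra_simps)
  thus ?thesis by (simp add: algebra_simps)
qed

lemma KK_zero:
  assumes nmu: "real n * \<mu> = 1"
    and rec: "\<forall>i. g (Suc (Suc i)) = -2 * (real n)^2 * Lv * g i"
    and m: "m \<le> Suc n"
  shows "KK n \<mu> Lv g m = 0"
proof (cases m)
  case 0 then show ?thesis by (simp add: KK_def)
next
  case (Suc m')
  show ?thesis
  proof (cases m')
    case 0 then show ?thesis using Suc KK_1[of n \<mu> Lv g] nmu by simp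
  next
    case (Suc i)
    have mi: "m = Suc (Suc i)" using Suc \<open>m = Suc m'\<close> by simp
    have il: "Suc i \<le> n" using m mi by simp
    let ?B = "real (n choose Suc i)"
    let ?gm = "g (Suc (Suc i))"
    have c1: "real (Suc (Suc i)) * real (n choose Suc (Suc i)) = ?B * (real n - real (Suc i))"
      using bin_id[OF il] by (simp add: mult.commute)
    have c2: "real (n - i) * real (n choose i) = ?B * real (Suc i)"
      using bin_id[of i n] il by (simp add: of_nat_diff mult.commute)
    have n0: "real n \<noteq> 0"
    proof
      assume "real n = 0" with nmu show False by simp
    qed
    have mu: "\<mu> = 1 / real n" using nmu n0 by (simp add: field_simps)
    have gi: "2 * Lv * g i = - (\<mu>^2 * ?gm)"
      using rec[rule_format, of i] n0 unfolding mu by (simp add: field_simps power2_eq_square)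
    have "KK n \<mu> Lv g m = - (real (Suc (Suc i)) * real (n choose Suc (Suc i)) * \<mu>^(Suc (Suc i))) * ?gm
        + ?B * \<mu>^(Suc i) * ?gm + (real (n - i) * real (n choose i)) * \<mu>^i * (2 * Lv * g i)"
      unfolding mi KK_def by (simp add: algebra_simps)
    also have "\<dots> = - (?B * (real n - real (Suc i)) * \<mu>^(Suc (Suc i))) * ?gm
        + ?B * \<mu>^(Suc i) * ?gm + (?B * real (Suc i)) * \<mu>^i * (- (\<mu>^2 * ?gm))"
      unfolding c1 c2 gi ..
    also have "\<dots> = ?B * \<mu>^(Suc i) * ?gm * (1 - real n * \<mu>)"
      by (simp add: algebra_simps power2_eq_square)
    also have "\<dots> = 0" using nmu by simp
    finally show ?thesis .
  qed
qed

lemma gs_rec: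
  assumes J: "open J" "smooth_on J F" "smooth_on J G"
    and base: "\<forall>x\<in>J. \<forall>y. gs F G (Suc (Suc 0)) x y = c * ((y^2/2 + F x) * gs F G 0 x y)"
  shows "\<forall>x\<in>J. \<forall>y. gs F G (Suc (Suc j)) x y = c * ((y^2/2 + F x) * gs F G j x y)"
proof (induction j)
  case 0 then show ?case using base by simp
next
  case (Suc j)
  show ?case
  proof (intro ballI allI)
    fix x y assume x: "x \<in> J"
    have hF: "DERIV F x :> deriv F x" by (rule smooth_DERIV[OF J(2) x])
    have hg: "DERIV (\<lambda>x'. gs F G j x' y) x :> deriv (\<lambda>x'. gs F G j x' y) x" by (rule gs_dx[OF J x])
    have hgy: "DERIV (\<lambda>y'. gs F G j x y') y :> deriv (\<lambda>y'. gs F G j x y') y" by (rule gs_dy[OF J x])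
    have "deriv (\<lambda>x'. gs F G (Suc (Suc j)) x' y) x = deriv (\<lambda>x'. c * ((y^2/2 + F x') * gs F G j x' y)) x"
      by (rule deriv_cong_ev[OF ev_open[OF J(1) x] refl]) (use Suc.IH in auto)
    also have "\<dots> = c * ((0 + deriv F x) * gs F G j x y + deriv (\<lambda>x'. gs F G j x' y) x * (y^2/2 + F x))"
      by (intro DERIV_imp_deriv DERIV_cmult DERIV_mult DERIV_add DERIV_const hF hg)
    finally have d1: "deriv (\<lambda>x'. gs F G (Suc (Suc j)) x' y) x =
       c * (deriv F x * gs F G j x y + deriv (\<lambda>x'. gs F G j x' y) x * (y^2/2 + F x))" by simp
    have "(\<lambda>y'. gs F G (Suc (Suc j)) x y') = (\<lambda>y'. c * ((y'^2/2 + F x) * gs F G j x y'))"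
      using Suc.IH x by auto
    hence "deriv (\<lambda>y'. gs F G (Suc (Suc j)) x y') y = deriv (\<lambda>y'. c * ((y'^2/2 + F x) * gs F G j x y')) y"
      by simp
    also have "\<dots> = c * ((real 2 * y^(2 - 1) / 2 + 0) * gs F G j x y + deriv (\<lambda>y'. gs F G j x y') y * (y^2/2 + F x))"
      by (intro DERIV_imp_deriv DERIV_cmult DERIV_mult DERIV_add DERIV_const hgy DERIV_cdivide d3)
    finally have d2: "deriv (\<lambda>y'. gs F G (Suc (Suc j)) x y') y =
       c * (y * gs F G j x y + deriv (\<lambda>y'. gs F G j x y') y * (y^2/2 + F x))" by simp
    show "gs F G (Suc (Suc (Suc j))) x y = c * ((y^2/2 + F x) * gs F G (Suc j) x y)"
      unfolding gs_Suc[of F G "Suc (Suc j)"] gs_Suc[of F G j] X2_def d1 d2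
      by (simp add: algebra_simps)
  qed
qed

lemma dG_cos:
  assumes "open J" "\<forall>x\<in>J. G x = A * cos (w * x + t)" "x \<in> J"
  shows "deriv G x = - (w * A * sin (w * x + t))"
proof -
  have "deriv G x = deriv (\<lambda>x. A * cos (w * x + t)) x"
    by (rule deriv_cong_ev[OF ev_open[OF assms(1,3)] refl]) (use assms(2) in auto)
  also have "\<dots> = - (w * A * sin (w * x + t))"
    by (rule DERIV_imp_deriv) (auto intro!: derivative_eq_intros simp: algebra_simps)
  finally show ?thesis .
qed

lemma F_zero_at:
  fixes w t k :: real
  assumes J: "open J" "\<psi> \<in> J" and c: "isCont F \<psi>" and w: "w > 0"
    and s0: "sin (w * \<psi> + t) = 0"
    and Fk: "\<forall>x\<in>J. sin (w * x + t) \<noteq> 0 \<longrightarrow> F x = k / (sin (w * x + t))^2"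
  shows "F \<psi> = 0"
proof -
  obtain e where e: "e > 0" "ball \<psi> e \<subseteq> J" using J open_contains_ball by blast
  have ev: "eventually (\<lambda>x. x \<in> J \<and> sin (w * x + t) \<noteq> 0) (at \<psi>)"
    unfolding eventually_at
  proof (intro exI[of _ "min e (pi / w)"] conjI)
    show "min e (pi / w) > 0" using e w by simp
  next
    show "\<forall>x\<in>UNIV. x \<noteq> \<psi> \<and> dist x \<psi> < min e (pi / w) \<longrightarrow> x \<in> J \<and> sin (w * x + t) \<noteq> 0"
    proof (intro ballI impI)
    fix x assume x: "x \<noteq> \<psi> \<and> dist x \<psi> < min e (pi / w)"
    show "x \<in> J \<and> sin (w * x + t) \<noteq> 0"
    proof
      show "x \<in> J" using x e by (auto simp: dist_commute)
      have "\<bar>x - \<psi>\<bar> < pi / w" using x by (simp add: dist_real_def)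
      hence "w * \<bar>x - \<psi>\<bar> < w * (pi / w)" using w by (intro mult_strict_left_mono) auto
      hence a: "\<bar>w * (x - \<psi>)\<bar> < pi" using w by (simp add: abs_mult)
      have b: "0 < \<bar>w * (x - \<psi>)\<bar>" using x w by (simp add: abs_mult)
      have "sin ((w * \<psi> + t) + w * (x - \<psi>)) \<noteq> 0" by (rule sin_zero_nbhd[OF s0 b a])
      thus "sin (w * x + t) \<noteq> 0" by (simp add: algebra_simps)
    qed
    qed
  qed
  have evk: "eventually (\<lambda>x. k = F x * (sin (w * x + t))^2) (at \<psi>)"
    using ev Fk by (auto elim!: eventually_mono)
  have "isCont (\<lambda>x. F x * (sin (w * x + t))^2) \<psi>"
    using c by (intro continuous_intros) auto
  hence l1: "((\<lambda>x. F x * (sin (w * x + t))^2) \<longlongrightarrow> 0) (at \<psi>)"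
    using s0 by (simp add: isCont_def)
  have l2: "((\<lambda>x. F x * (sin (w * x + t))^2) \<longlongrightarrow> k) (at \<psi>)"
    by (rule Lim_transform_eventually[OF tendsto_const evk])
  have k0: "k = 0" using tendsto_unique[OF at_neq_bot l2 l1] .
  have ev0: "eventually (\<lambda>x. F x = 0) (at \<psi>)"
    using ev Fk k0 by (auto elim!: eventually_mono)
  have l3: "(F \<longlongrightarrow> F \<psi>) (at \<psi>)" using c by (simp add: isCont_def)
  have l4: "(F \<longlongrightarrow> 0) (at \<psi>)"
    by (rule Lim_transform_eventually[OF tendsto_const]) (use ev0 in \<open>auto elim!: eventually_mono\<close>)
  show ?thesis using tendsto_unique[OF at_neq_bot l3 l4] .
qed

lemma dh:
  fixes w t F1 :: real
  assumes "DERIV F x :> F1"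
  shows "DERIV (\<lambda>x. F x * (sin (w*x+t))^2) x :> F1 * (sin(w*x+t))^2 + F x * (2 * sin(w*x+t) * cos(w*x+t) * w)"
  using assms by (auto intro!: derivative_eq_intros simp: power2_eq_square algebra_simps)

lemma fwd:
  assumes n: "n \<ge> 1" and J: "open J" "is_interval J" and sF: "smooth_on J F" and sG: "smooth_on J G"
    and nc: "\<exists>x\<in>J. \<exists>y\<in>J. G x \<noteq> G y"
    and com: "const_of_motion J F (Ilam n \<mu> F G)"
  shows "real n * \<mu> = 1 \<and>
          (\<exists>k \<psi>\<^sub>0 A. A \<noteq> 0 \<and>
             (\<forall>\<psi>\<in>J. (sin (real n * \<psi> + \<psi>\<^sub>0) \<noteq> 0 \<longrightarrow>
                        F \<psi> = k / (sin (real n * \<psi> + \<psi>\<^sub>0))\<^sup>2) \<and>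
                     G \<psi> = A * cos (real n * \<psi> + \<psi>\<^sub>0)))"
proof -
  have cvx: "convex J" using J(2) is_interval_convex_1 by blast
  have hK: "KK n \<mu> (p\<^sup>2/2 + F \<psi>) (\<lambda>j. gs F G j \<psi> p) m = 0" if \<psi>: "\<psi> \<in> J" and m: "m \<le> Suc n" for \<psi> p m
  proof -
    have "\<forall>pr. XH F (Ilam n \<mu> F G) 1 \<psi> pr p = 0" using com \<psi> unfolding const_of_motion_def by simp
    thus ?thesis using XH_zero_iff[OF J(1) sF sG \<psi>, of 1 n \<mu> p] m by simp
  qed
  have ex: "\<exists>\<psi>\<in>J. deriv G \<psi> \<noteq> 0"
  proof (rule ccontr)
    assume "\<not> (\<exists>\<psi>\<in>J. deriv G \<psi> \<noteq> 0)"
    hence z: "\<forall>x\<in>J. deriv G x = 0" by blast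
    have "\<exists>c. \<forall>x\<in>J. G x = c"
    proof (rule has_field_derivative_zero_constant[OF cvx])
      fix x assume x: "x \<in> J"
      have "DERIV G x :> 0" using smooth_DERIV[OF sG x] z x by simp
      thus "(G has_field_derivative 0) (at x within J)" using has_field_derivative_at_within by blast
    qed
    thus False using nc by force
  qed
  then obtain \<psi>1 where \<psi>1: "\<psi>1 \<in> J" "deriv G \<psi>1 \<noteq> 0" by blast
  have "(1 - real n * \<mu>) * gs F G (Suc 0) \<psi>1 1 = 0" using hK[OF \<psi>1(1), of "Suc 0" 1] KK_1 by simp
  hence nmu: "real n * \<mu> = 1" using \<psi>1(2) gs_1 by simp
  have n0: "real n > 0" using n by simp
  have mu: "\<mu> = 1 / real n" using nmu n0 by (simp add: field_simps)
  have c2: "2 * real (n choose 2) = real n * (real n - 1)" using choose2[OF n] by simp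
  have E: "p * p * deriv (deriv G) \<psi> - deriv F \<psi> * deriv G \<psi> + 2 * (real n)^2 * (p\<^sup>2/2 + F \<psi>) * G \<psi> = 0"
    if \<psi>: "\<psi> \<in> J" for \<psi> p
  proof -
    let ?X = "gs F G (Suc (Suc 0)) \<psi> p"
    let ?L = "p\<^sup>2/2 + F \<psi>"
    have "KK n \<mu> ?L (\<lambda>j. gs F G j \<psi> p) (Suc (Suc 0)) = 0" using hK[OF \<psi>] n by simp
    hence e0: "- (2 * real (n choose 2) * \<mu>^2) * ?X + real n * \<mu> * ?X + 2 * ?L * real n * G \<psi> = 0"
      unfolding KK_2 gs_0 .
    have "?X + 2 * (real n)^2 * ?L * G \<psi>
        = real n * (- (2 * real (n choose 2) * \<mu>^2) * ?X + real n * \<mu> * ?X + 2 * ?L * real n * G \<psi>)"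
      unfolding c2 mu using n0 by (simp add: field_simps power2_eq_square)
    also have "\<dots> = 0" using e0 by simp
    finally show ?thesis unfolding gs_2[OF sG \<psi>] by simp
  qed
  have Gpp: "deriv (deriv G) x = - ((real n)^2 * G x)" if x: "x \<in> J" for x
    using E[OF x, of 1] E[OF x, of 0] by (simp add: algebra_simps)
  have FG: "deriv F x * deriv G x = 2 * (real n)^2 * F x * G x" if x: "x \<in> J" for x
    using E[OF x, of 0] by (simp add: algebra_simps)
  have "\<exists>a b. \<forall>x\<in>J. G x = a * cos (real n * x) + b * sin (real n * x)"
  proof (rule ode_sol[OF cvx, of "real n" G "deriv G"])
    show "real n \<noteq> 0" using n0 by simp
    show "\<forall>x\<in>J. DERIV G x :> deriv G x" using smooth_DERIV[OF sG] by blast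
    show "\<forall>x\<in>J. DERIV (deriv G) x :> - ((real n)^2) * G x"
    proof
      fix x assume x: "x \<in> J"
      have "DERIV (deriv G) x :> deriv (deriv G) x" by (rule smooth_DERIV[OF smooth_deriv[OF sG] x])
      thus "DERIV (deriv G) x :> - ((real n)^2) * G x" unfolding Gpp[OF x] by simp
    qed
  qed
  then obtain a b where ab: "\<forall>x\<in>J. G x = a * cos (real n * x) + b * sin (real n * x)" by blast
  obtain A t where At: "A = sqrt (a^2 + b^2)" "a = A * cos t" "b = - (A * sin t)" by (rule polar)
  have GA: "\<forall>x\<in>J. G x = A * cos (real n * x + t)"
  proof
    fix x assume x: "x \<in> J"
    have "A * cos (real n * x + t) = a * cos (real n * x) + b * sin (real n * x)"
      unfolding cos_add At(2) At(3) by (simp add: algebra_simps)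
    thus "G x = A * cos (real n * x + t)" using ab x by simp
  qed
  have A0: "A \<noteq> 0"
  proof
    assume "A = 0"
    hence "\<forall>x\<in>J. G x = 0" using GA by simp
    thus False using nc by force
  qed
  have dG: "deriv G x = - (real n * A * sin (real n * x + t))" if x: "x \<in> J" for x
    by (rule dG_cos[OF J(1) GA x])
  define h where "h x = F x * (sin (real n * x + t))^2" for x
  have "\<exists>k. \<forall>x\<in>J. h x = k"
  proof (rule has_field_derivative_zero_constant[OF cvx])
    fix x assume x: "x \<in> J"
    let ?s = "sin (real n * x + t)" and ?c = "cos (real n * x + t)"
    have d: "DERIV h x :> deriv F x * ?s^2 + F x * (2 * ?s * ?c * real n)"
      unfolding h_def[abs_def] by (rule dh[OF smooth_DERIV[OF sF x]])
    have "deriv F x * (- (real n * A * ?s)) = 2 * (real n)^2 * F x * (A * ?c)"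
      using FG[OF x] dG[OF x] GA x by simp
    hence "(real n * A) * (deriv F x * ?s) = (real n * A) * (- 2 * real n * F x * ?c)"
      by (simp add: algebra_simps power2_eq_square)
    moreover have nA: "real n * A \<noteq> 0" using A0 n0 by simp
    ultimately have key: "deriv F x * ?s = - 2 * real n * F x * ?c" using mult_left_cancel[OF nA] by blast
    have "deriv F x * ?s^2 + F x * (2 * ?s * ?c * real n) = ?s * (deriv F x * ?s + 2 * real n * F x * ?c)"
      by (simp add: algebra_simps power2_eq_square)
    also have "\<dots> = 0" using key by simp
    finally have "DERIV h x :> 0" using d by simp
    thus "(h has_field_derivative 0) (at x within J)" using has_field_derivative_at_within by blast
  qed
  then obtain k where k: "\<forall>x\<in>J. h x = k" by blast
  have "\<forall>\<psi>\<in>J. (sin (real n * \<psi> + t) \<noteq> 0 \<longrightarrow> F \<psi> = k / (sin (real n * \<psi> + t))\<^sup>2) \<and>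
                     G \<psi> = A * cos (real n * \<psi> + t)"
  proof (intro ballI conjI impI)
    fix \<psi> assume \<psi>: "\<psi> \<in> J" and s: "sin (real n * \<psi> + t) \<noteq> 0"
    show "F \<psi> = k / (sin (real n * \<psi> + t))\<^sup>2" using k \<psi> s unfolding h_def by (simp add: field_simps)
  next
    fix \<psi> assume \<psi>: "\<psi> \<in> J"
    show "G \<psi> = A * cos (real n * \<psi> + t)" using GA \<psi> by simp
  qed
  thus ?thesis using nmu A0 by blast
qed

lemma bwd:
  assumes n: "n \<ge> 1" and J: "open J" and sF: "smooth_on J F" and sG: "smooth_on J G"
    and nmu: "real n * \<mu> = 1" and A0: "A \<noteq> 0"
    and H: "\<forall>\<psi>\<in>J. (sin (real n * \<psi> + \<psi>\<^sub>0) \<noteq> 0 \<longrightarrow> F \<psi> = k / (sin (real n * \<psi> + \<psi>\<^sub>0))\<^sup>2) \<and>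
                     G \<psi> = A * cos (real n * \<psi> + \<psi>\<^sub>0)"
  shows "const_of_motion J F (Ilam n \<mu> F G)"
proof -
  have n0: "real n > 0" using n by simp
  have GA: "\<forall>x\<in>J. G x = A * cos (real n * x + \<psi>\<^sub>0)" using H by blast
  have Fk: "\<forall>x\<in>J. sin (real n * x + \<psi>\<^sub>0) \<noteq> 0 \<longrightarrow> F x = k / (sin (real n * x + \<psi>\<^sub>0))\<^sup>2" using H by blast
  have dG: "deriv G x = - (real n * A * sin (real n * x + \<psi>\<^sub>0))" if x: "x \<in> J" for x
    by (rule dG_cos[OF J(1) GA x])
  have Gpp: "deriv (deriv G) x = - ((real n)^2 * G x)" if x: "x \<in> J" for x
  proof -
    have "deriv (deriv G) x = deriv (\<lambda>x. - (real n * A * sin (real n * x + \<psi>\<^sub>0))) x"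
      by (rule deriv_cong_ev[OF ev_open[OF J x] refl]) (use dG in auto)
    also have "\<dots> = - (real n * A * (cos (real n * x + \<psi>\<^sub>0) * real n))"
      by (rule DERIV_imp_deriv) (auto intro!: derivative_eq_intros)
    finally show ?thesis using GA x by (simp add: power2_eq_square algebra_simps)
  qed
  have FG: "deriv F x * deriv G x = 2 * (real n)^2 * F x * G x" if x: "x \<in> J" for x
  proof (cases "sin (real n * x + \<psi>\<^sub>0) = 0")
    case True
    have "F x = 0"
      by (rule F_zero_at[OF J x DERIV_isCont[OF smooth_DERIV[OF sF x]] n0 True Fk])
    thus ?thesis using dG[OF x] True by simp
  next
    case False
    let ?s = "sin (real n * x + \<psi>\<^sub>0)" and ?c = "cos (real n * x + \<psi>\<^sub>0)"
    have op: "open {y. sin (real n * y + \<psi>\<^sub>0) \<noteq> 0}"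
      by (rule open_Collect_neq) (auto intro!: continuous_intros)
    have ev: "eventually (\<lambda>y. y \<in> J \<inter> {y. sin (real n * y + \<psi>\<^sub>0) \<noteq> 0}) (nhds x)"
      by (rule eventually_nhds_in_open) (use J op x False in auto)
    have evh: "eventually (\<lambda>y. k = F y * (sin (real n * y + \<psi>\<^sub>0))^2) (nhds x)"
      using ev Fk by (auto elim!: eventually_mono)
    have d0: "DERIV (\<lambda>y. F y * (sin (real n * y + \<psi>\<^sub>0))^2) x :> 0"
      using DERIV_cong_ev[OF refl evh refl] DERIV_const by blast
    have d: "DERIV (\<lambda>y. F y * (sin (real n * y + \<psi>\<^sub>0))^2) x :> deriv F x * ?s^2 + F x * (2 * ?s * ?c * real n)"
      by (rule dh[OF smooth_DERIV[OF sF x]])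
    have "deriv F x * ?s^2 + F x * (2 * ?s * ?c * real n) = 0" using DERIV_unique[OF d d0] .
    hence "?s * (deriv F x * ?s + 2 * real n * F x * ?c) = 0" by (simp add: algebra_simps power2_eq_square)
    hence key: "deriv F x * ?s = - 2 * real n * F x * ?c" using False by simp
    have "deriv F x * deriv G x = - (real n * A) * (deriv F x * ?s)" using dG[OF x] by simp
    also have "\<dots> = 2 * (real n)^2 * F x * (A * ?c)" unfolding key by (simp add: power2_eq_square)
    finally show ?thesis using GA x by simp
  qed
  have base: "\<forall>x\<in>J. \<forall>y. gs F G (Suc (Suc 0)) x y = (- 2 * (real n)^2) * ((y^2/2 + F x) * gs F G 0 x y)"
  proof (intro ballI allI)
    fix x y assume x: "x \<in> J"
    show "gs F G (Suc (Suc 0)) x y = (- 2 * (real n)^2) * ((y^2/2 + F x) * gs F G 0 x y)"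
      unfolding gs_2[OF sG x] gs_0 using Gpp[OF x] FG[OF x]
      by (simp add: algebra_simps power2_eq_square)
  qed
  have rec: "\<forall>x\<in>J. \<forall>y. gs F G (Suc (Suc j)) x y = (- 2 * (real n)^2) * ((y^2/2 + F x) * gs F G j x y)" for j
    by (rule gs_rec[OF J sF sG base])
  show ?thesis unfolding const_of_motion_def
  proof (intro allI impI ballI)
    fix r \<psi> pr p :: real assume r: "r > 0" and \<psi>: "\<psi> \<in> J"
    have "\<forall>m\<le>Suc n. KK n \<mu> (p\<^sup>2/2 + F \<psi>) (\<lambda>j. gs F G j \<psi> p) m = 0"
    proof (intro allI impI)
      fix m assume m: "m \<le> Suc n"
      show "KK n \<mu> (p\<^sup>2/2 + F \<psi>) (\<lambda>j. gs F G j \<psi> p) m = 0"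
      proof (rule KK_zero[OF nmu _ m])
        show "\<forall>i. gs F G (Suc (Suc i)) \<psi> p = - 2 * (real n)\<^sup>2 * (p\<^sup>2 / 2 + F \<psi>) * gs F G i \<psi> p"
          using rec \<psi> by (simp add: algebra_simps)
      qed
    qed
    thus "XH F (Ilam n \<mu> F G) r \<psi> pr p = 0" using XH_zero_iff[OF J sF sG \<psi> r] by blast
  qed
qed

theorem theorem1:
  fixes n :: nat and \<mu> :: real and F G :: "real \<Rightarrow> real" and J :: "real set"
  assumes "n \<ge> 1"
    and "open J" and "is_interval J" and "J \<noteq> {}"
    and "smooth_on J F" and "smooth_on J G"
    and "\<exists>x\<in>J. \<exists>y\<in>J. G x \<noteq> G y"
  shows "const_of_motion J F (Ilam n \<mu> F G) \<longleftrightarrow>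
         (real n * \<mu> = 1 \<and>
          (\<exists>k \<psi>\<^sub>0 A. A \<noteq> 0 \<and>
             (\<forall>\<psi>\<in>J. (sin (real n * \<psi> + \<psi>\<^sub>0) \<noteq> 0 \<longrightarrow>
                        F \<psi> = k / (sin (real n * \<psi> + \<psi>\<^sub>0))\<^sup>2) \<and>
                     G \<psi> = A * cos (real n * \<psi> + \<psi>\<^sub>0))))"
proof
  assume "const_of_motion J F (Ilam n \<mu> F G)"
  thus "real n * \<mu> = 1 \<and>
          (\<exists>k \<psi>\<^sub>0 A. A \<noteq> 0 \<and>
             (\<forall>\<psi>\<in>J. (sin (real n * \<psi> + \<psi>\<^sub>0) \<noteq> 0 \<longrightarrow>
                        F \<psi> = k / (sin (real n * \<psi> + \<psi>\<^sub>0))\<^sup>2) \<and>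
                     G \<psi> = A * cos (real n * \<psi> + \<psi>\<^sub>0)))"
    using fwd[OF assms(1,2,3,5,6,7)] by blast
next
  assume "real n * \<mu> = 1 \<and>
          (\<exists>k \<psi>\<^sub>0 A. A \<noteq> 0 \<and>
             (\<forall>\<psi>\<in>J. (sin (real n * \<psi> + \<psi>\<^sub>0) \<noteq> 0 \<longrightarrow>
                        F \<psi> = k / (sin (real n * \<psi> + \<psi>\<^sub>0))\<^sup>2) \<and>
                     G \<psi> = A * cos (real n * \<psi> + \<psi>\<^sub>0)))"
  then obtain k \<psi>\<^sub>0 A where "real n * \<mu> = 1" "A \<noteq> 0"
    "\<forall>\<psi>\<in>J. (sin (real n * \<psi> + \<psi>\<^sub>0) \<noteq> 0 \<longrightarrow> F \<psi> = k / (sin (real n * \<psi> + \<psi>\<^sub>0))\<^sup>2) \<and>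
                     G \<psi> = A * cos (real n * \<psi> + \<psi>\<^sub>0)" by blast
  thus "const_of_motion J F (Ilam n \<mu> F G)" using bwd[OF assms(1,2,5,6)] by blast
qed


end
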